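(* Let $q\equiv 3\pmod 4$ be a prime power. Let $\Psi:\mathcal{H}_2(\mathbb{F}_{q^2})\to\mathcal{H}_2(\mathbb{F}_{q^2})$ and $\Phi:\mathcal{HGL}_2(\mathbb{F}_{q^2})\to\mathcal{HGL}_2(\mathbb{F}_{q^2})$ be maps and set $\psi=\Omega^{-1}\circ\Psi\circ\Omega:\mathbb{F}_q^4\to\mathbb{F}_q^4$ and $\varphi=\omega^{-1}\circ\Phi\circ\omega:\mathbb{F}_q^4\setminus C_0\to\mathbb{F}_q^4\setminus C_0$. Then: (i) If $\Psi(A)=A+B$ for some fixed $B\in\mathcal{H}_2(\mathbb{F}_{q^2})$, then $\psi(\mathbf{r})=\mathbf{r}+\mathbf{r}_0$ for some $\mathbf{r}_0\in\mathbb{F}_q^4$. (ii) If $\Phi(A)=A^{-1}$, then $\varphi(\mathbf{r})=\frac{L\mathbf{r}}{(\mathbf{r},\mathbf{r})}$ for some Lorentz matrix $L$. (iii) If $\Psi(A)=A^\sigma$ for some field automorphism $\sigma$ of $\mathbb{F}_{q^2}$ (applied entry-wise), then $\psi(\mathbf{r})=L\mathbf{r}^\tau$ for some Lorentz matrix $L$ and some automorphism $\tau$ of $\mathbb{F}_q$ (applied coordinate-wise). (iv) If $\Psi(A)=PAP^\ast$ for some invertible $2\times2$ matrix $P$ such that $\det P\,\overline{\det P}$ is a square in $\mathbb{F}_q$, then $\psi(\mathbf{r})=\alpha L\mathbf{r}$ for some Lorentz matrix $L$ and nonzero $\alpha\in\mathbb{F}_q$. (v) If $\Psi(A)=PAP^\ast$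 for some invertible $P$ such that $\det P\,\overline{\det P}$ is not a square in $\mathbb{F}_q$, then $\psi(\mathbf{r})=\alpha K\mathbf{r}$ for some anti-Lorentz matrix $K$ and nonzero $\alpha\in\mathbb{F}_q$.
   Context: $\mathbb{F}_{q^2}$ is the field with $q^2$ elements, with involution $\bar x=x^q$ whose fixed field is $\mathbb{F}_q$; $X^\ast=\bar X^\top$; $\mathcal{H}_2(\mathbb{F}_{q^2})$ is the set of $2\times2$ hermitian ($A^\ast=A$) matrices and $\mathcal{HGL}_2(\mathbb{F}_{q^2})$ its invertible elements. Since $q\equiv3\pmod4$, $-1$ is not a square in $\mathbb{F}_q$; fix $\imath\in\mathbb{F}_{q^2}$ with $\imath^2=-1$. For $\mathbf{r}_k=(x_k,y_k,z_k,t_k)^\top\in\mathbb{F}_q^4$ put $(\mathbf{r}_1,\mathbf{r}_2)=-x_1x_2-y_1y_2-z_1z_2+t_1t_2$, and $C_0=\{\mathbf{r}:(\mathbf{r},\mathbf{r})=0\}$. A $4\times4$ matrix $L$ over $\mathbb{F}_q$ is Lorentz if $(L\mathbf{r}_1,L\mathbf{r}_2)=(\mathbf{r}_1,\mathbf{r}_2)$ for all $\mathbf{r}_1,\mathbf{r}_2$, and anti-Lorentz if $(L\mathbf{r}_1,L\mathbf{r}_2)=-(\mathbf{r}_1,\mathbf{r}_2)$ for all $\mathbf{r}_1,\mathbf{r}_2$. $\Omega:\mathbb{F}_q^4\to\mathcal{H}_2(\mathbb{F}_{q^2})$ is the bijection $\Omega((x,y,z,t)^\top)=\begin{bmatrix}t+x&y+\imath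 z\\ y-\imath z&t-x\end{bmatrix}$, which maps $\mathbb{F}_q^4\setminus C_0$ bijectively onto $\mathcal{HGL}_2(\mathbb{F}_{q^2})$; $\omega$ is this restriction. *)

theory Defs
  imports "HOL-Analysis.Analysis"
begin

text \<open>The field F_{q^2} is a finite field type 'k with CARD('k) = q^2.
  Involution: bar x = x^q; F_q is its fixed field.\<close>

definition cnj :: "nat \<Rightarrow> 'k::field \<Rightarrow> 'k" where
  "cnj q x = x ^ q"

definition Fq :: "nat \<Rightarrow> 'k::field set" where
  "Fq q = {x. x ^ q = x}"

definition Fq4 :: "nat \<Rightarrow> ('k::field ^ 4) set" where
  "Fq4 q = {r. \<forall>i. r $ i \<in> Fq q}"

definition adjm :: "nat \<Rightarrow> 'k::field ^ 2 ^ 2 \<Rightarrow> 'k ^ 2 ^ 2" where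
  "adjm q X = (\<chi> i j. cnj q (X $ j $ i))"

definition H2 :: "nat \<Rightarrow> ('k::field ^ 2 ^ 2) set" where
  "H2 q = {A. adjm q A = A}"

definition HGL2 :: "nat \<Rightarrow> ('k::field ^ 2 ^ 2) set" where
  "HGL2 q = {A. A \<in> H2 q \<and> invertible A}"

text \<open>Minkowski form (r1,r2) = -x1x2 - y1y2 - z1z2 + t1t2, coordinates (x,y,z,t) = (r$1,r$2,r$3,r$4)\<close>
definition mink :: "'k::field ^ 4 \<Rightarrow> 'k ^ 4 \<Rightarrow> 'k" where
  "mink r1 r2 = - (r1$1 * r2$1) - (r1$2 * r2$2) - (r1$3 * r2$3) + (r1$4 * r2$4)"

definition C0 :: "nat \<Rightarrow> ('k::field ^ 4) set" where
  "C0 q = {r \<in> Fq4 q. mink r r = 0}"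

definition mat2 :: "'k \<Rightarrow> 'k \<Rightarrow> 'k \<Rightarrow> 'k \<Rightarrow> 'k ^ 2 ^ 2" where
  "mat2 a b c d = (\<chi> i j. if i = 1 then (if j = 1 then a else b) else (if j = 1 then c else d))"

text \<open>Omega((x,y,z,t)) = [[t+x, y + i z],[y - i z, t - x]] for a fixed square root i of -1\<close>
definition Omega :: "'k::field \<Rightarrow> 'k ^ 4 \<Rightarrow> 'k ^ 2 ^ 2" where
  "Omega ii r = mat2 (r$4 + r$1) (r$2 + ii * r$3) (r$2 - ii * r$3) (r$4 - r$1)"

definition psi_of :: "nat \<Rightarrow> 'k::field \<Rightarrow> ('k ^ 2 ^ 2 \<Rightarrow> 'k ^ 2 ^ 2) \<Rightarrow> 'k ^ 4 \<Rightarrow> 'k ^ 4" where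
  "psi_of q ii Psi = inv_into (Fq4 q) (Omega ii) \<circ> Psi \<circ> Omega ii"

definition phi_of :: "nat \<Rightarrow> 'k::field \<Rightarrow> ('k ^ 2 ^ 2 \<Rightarrow> 'k ^ 2 ^ 2) \<Rightarrow> 'k ^ 4 \<Rightarrow> 'k ^ 4" where
  "phi_of q ii Phi = inv_into (Fq4 q - C0 q) (Omega ii) \<circ> Phi \<circ> Omega ii"

definition lorentz :: "nat \<Rightarrow> 'k::field ^ 4 ^ 4 \<Rightarrow> bool" where
  "lorentz q L \<longleftrightarrow> (\<forall>i j. L $ i $ j \<in> Fq q) \<and>
     (\<forall>r1 \<in> Fq4 q. \<forall>r2 \<in> Fq4 q. mink (L *v r1) (L *v r2) = mink r1 r2)"

definition anti_lorentz :: "nat \<Rightarrow> 'k::field ^ 4 ^ 4 \<Rightarrow> bool" where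
  "anti_lorentz q L \<longleftrightarrow> (\<forall>i j. L $ i $ j \<in> Fq q) \<and>
     (\<forall>r1 \<in> Fq4 q. \<forall>r2 \<in> Fq4 q. mink (L *v r1) (L *v r2) = - mink r1 r2)"

definition field_aut :: "('k::field \<Rightarrow> 'k) \<Rightarrow> bool" where
  "field_aut s \<longleftrightarrow> bij s \<and> (\<forall>x y. s (x + y) = s x + s y) \<and> (\<forall>x y. s (x * y) = s x * s y)"

definition Fq_aut :: "nat \<Rightarrow> ('k::field \<Rightarrow> 'k) \<Rightarrow> bool" where
  "Fq_aut q t \<longleftrightarrow> bij_betw t (Fq q) (Fq q) \<and>
     (\<forall>x \<in> Fq q. \<forall>y \<in> Fq q. t (x + y) = t x + t y \<and> t (x * y) = t x * t y)"

definition prime_power :: "nat \<Rightarrow> bool" where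
  "prime_power q \<longleftrightarrow> (\<exists>p k. prime p \<and> k > 0 \<and> q = p ^ k)"

end

theory Submission
  imports Defs "HOL-Number_Theory.Number_Theory"
begin

lemma ff_power_card:
  fixes x :: "'a :: {field,finite}"
  shows   "x ^ card (UNIV :: 'a set) = x"
proof (cases "x = 0")
  case False
  have "x * (\<Prod>y\<in>UNIV-{0}. x * y) = x * x ^ (card (UNIV :: 'a set) - 1) * \<Prod>(UNIV-{0})"
    by (simp add: prod.distrib mult_ac)
  also have "x * x ^ (card (UNIV :: 'a set) - 1) = x ^ Suc (card (UNIV :: 'a set) - 1)"
    by (subst power_Suc) auto
  also have "Suc (card (UNIV :: 'a set) - 1) = card (UNIV :: 'a set)"
    using finite_UNIV_card_ge_0[where ?'a = 'a] by simp
  also have "(\<Prod>y\<in>UNIV-{0}. x * y) = (\<Prod>y\<in>UNIV-{0}. y)"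
    by (rule prod.reindex_bij_witness[of _ "\<lambda>y. y / x" "\<lambda>y. x * y"]) (use False in auto)
  finally show ?thesis
    by simp
qed (use finite_UNIV_card_ge_0[where ?'a = 'a] in auto)

definition vec4 :: "'a \<Rightarrow> 'a \<Rightarrow> 'a \<Rightarrow> 'a \<Rightarrow> 'a ^ 4" where
  "vec4 a b c d = (\<chi> i. if i = 1 then a else if i = 2 then b else if i = 3 then c else d)"

lemma vec4_nth [simp]: "vec4 a b c d $ 1 = a" "vec4 a b c d $ 2 = b" "vec4 a b c d $ 3 = c" "vec4 a b c d $ 4 = d"
  by (simp_all add: vec4_def)

lemma mat2_nth [simp]: "mat2 a b c d $ 1 $ 1 = a" "mat2 a b c d $ 1 $ 2 = b" "mat2 a b c d $ 2 $ 1 = c" "mat2 a b c d $ 2 $ 2 = d"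
  by (simp_all add: mat2_def)

lemma vec4_eq: "(x :: 'a ^ 4) = y \<longleftrightarrow> x$1 = y$1 \<and> x$2 = y$2 \<and> x$3 = y$3 \<and> x$4 = y$4"
  by (simp add: vec_eq_iff forall_4)

lemma mat2_eq: "(A :: 'a ^ 2 ^ 2) = B \<longleftrightarrow> A$1$1 = B$1$1 \<and> A$1$2 = B$1$2 \<and> A$2$1 = B$2$1 \<and> A$2$2 = B$2$2"
  by (simp add: vec_eq_iff forall_2)

lemma vec4_expand: "(x :: 'a ^ 4) = vec4 (x$1) (x$2) (x$3) (x$4)"
  by (simp add: vec4_eq)

lemma mat2_expand: "(A :: 'a ^ 2 ^ 2) = mat2 (A$1$1) (A$1$2) (A$2$1) (A$2$2)"
  by (simp add: mat2_eq)

lemma mult2_mat2: "(mat2 a b c d :: 'a::comm_semiring_1^2^2) ** mat2 e f g h = mat2 (a*e+b*g) (a*f+b*h) (c*e+d*g) (c*f+d*h)"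
  by (simp add: mat2_eq matrix_matrix_mult_def sum_2)

definition smat :: "'a::times \<Rightarrow> 'a^'n^'m \<Rightarrow> 'a^'n^'m" where
  "smat a M = (\<chi> i j. a * M$i$j)"

definition Oinv :: "'k::field \<Rightarrow> 'k^2^2 \<Rightarrow> 'k^4" where
  "Oinv ii A = vec4 ((A$1$1 - A$2$2)/2) ((A$1$2 + A$2$1)/2) ((A$1$2 - A$2$1)/(2*ii)) ((A$1$1 + A$2$2)/2)"

locale LS =
  fixes q :: nat and ii :: "'k::{field,finite}"
  assumes pp: "prime_power q" and q3: "q mod 4 = 3" and cardk: "CARD('k) = q ^ 2"
    and ii2: "ii ^ 2 = -1"
begin

lemma charp: "prime CHAR('k)"
  by (rule prime_CHAR_semidom) (simp add: finite_imp_CHAR_pos)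

lemma q_char: "\<exists>n. q = CHAR('k) ^ n"
proof -
  obtain p k where p: "prime p" "k > 0" "q = p ^ k" using pp unfolding prime_power_def by auto
  have "CHAR('k) dvd p ^ (2*k)" using CHAR_dvd_CARD[where 'a='k] cardk p(3)
    by (simp add: power_mult[symmetric] mult.commute)
  hence "CHAR('k) dvd p" using charp prime_dvd_power by blast
  hence "CHAR('k) = p" using p(1) charp by (simp add: primes_dvd_imp_eq)
  thus ?thesis using p by auto
qed

lemma frob_add: "(x + y :: 'k) ^ q = x ^ q + y ^ q"
  using q_char charp freshmans_dream' by blast

lemma frob_sum: "(sum f A :: 'k) ^ q = sum (\<lambda>i. f i ^ q) A"
  using q_char charp freshmans_dream_sum' by blast

lemma q_odd: "odd q"
proof
  assume "even q" then have "q mod 2 = 0" by simp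
  moreover have "q mod 2 = (q mod 4) mod 2" by (simp add: mod_mod_cancel)
  ultimately show False using q3 by simp
qed

lemma two_nz: "(2::'k) \<noteq> 0"
proof
  assume "(2::'k) = 0"
  hence "of_nat 2 = (0::'k)" by simp
  hence "CHAR('k) dvd 2" using of_nat_eq_0_iff_char_dvd by blast
  hence c2: "CHAR('k) = 2" using charp by (simp add: primes_dvd_imp_eq)
  obtain n where "q = CHAR('k) ^ n" using q_char by blast
  moreover have "n > 0" using calculation q3 by (cases n) auto
  ultimately have "even q" using c2 by auto
  thus False using q_odd by simp
qed

lemma q_pos: "q > 0" using q_odd by (cases q) auto

lemma frob_minus: "(- x :: 'k) ^ q = - (x ^ q)"
  using q_odd by (simp add: power_minus_odd)

lemma frob_diff: "(x - y :: 'k) ^ q = x ^ q - y ^ q"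
  using frob_add[of x "-y"] frob_minus by simp

lemma frob_invol: "((x::'k) ^ q) ^ q = x"
proof -
  have "(x^q)^q = x^(q*q)" by (simp add: power_mult)
  also have "q*q = card (UNIV::'k set)" using cardk by (simp add: power2_eq_square)
  finally show ?thesis using ff_power_card[of x] by simp
qed

lemma cnj_ii: "ii ^ q = - ii"
proof -
  define k where "k = q div 4"
  have k: "q = 4*k + 3" using div_mult_mod_eq[of q 4] q3 unfolding k_def by simp
  have "ii ^ 4 = (ii^2)^2" by (simp only: power_mult[symmetric]) simp
  hence "ii ^ 4 = 1" using ii2 by simp
  have "ii ^ q = (ii ^ 4) ^ k * ii ^ 3" unfolding k by (simp only: power_add power_mult)
  hence "ii ^ q = ii ^ 3" using \<open>ii^4 = 1\<close> by simp
  also have "\<dots> = - ii" using ii2 by (simp add: power3_eq_cube power2_eq_square)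
  finally show ?thesis .
qed


lemma Fq_0 [simp]: "(0::'k) \<in> Fq q" using q_pos by (simp add: Fq_def)
lemma Fq_1 [simp]: "(1::'k) \<in> Fq q" by (simp add: Fq_def)
lemma Fq_add [simp]: "x \<in> Fq q \<Longrightarrow> y \<in> Fq q \<Longrightarrow> (x + y :: 'k) \<in> Fq q"
  by (simp add: Fq_def frob_add)
lemma Fq_mult [simp]: "x \<in> Fq q \<Longrightarrow> y \<in> Fq q \<Longrightarrow> (x * y :: 'k) \<in> Fq q"
  by (simp add: Fq_def power_mult_distrib)
lemma Fq_minus [simp]: "x \<in> Fq q \<Longrightarrow> (- x :: 'k) \<in> Fq q"
  by (simp add: Fq_def frob_minus)
lemma Fq_diff [simp]: "x \<in> Fq q \<Longrightarrow> y \<in> Fq q \<Longrightarrow> (x - y :: 'k) \<in> Fq q"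
  by (simp add: Fq_def frob_diff)
lemma Fq_inverse [simp]: "x \<in> Fq q \<Longrightarrow> (inverse x :: 'k) \<in> Fq q"
  by (simp add: Fq_def power_inverse)
lemma Fq_divide [simp]: "x \<in> Fq q \<Longrightarrow> y \<in> Fq q \<Longrightarrow> (x / y :: 'k) \<in> Fq q"
  by (simp add: divide_inverse)
lemma Fq_2 [simp]: "(2::'k) \<in> Fq q"
  using Fq_add[OF Fq_1 Fq_1] by (simp add: one_add_one)
lemma Fq_power [simp]: "x \<in> Fq q \<Longrightarrow> (x ^ n :: 'k) \<in> Fq q"
  by (induction n) auto
lemma finite_Fq: "finite (Fq q :: 'k set)" by simp

lemma ii_nz: "ii \<noteq> 0" using ii2 by auto

lemma ii_notin: "ii \<notin> Fq q"
proof
  assume "ii \<in> Fq q"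
  hence "ii = - ii" using cnj_ii by (simp add: Fq_def)
  hence "2 * ii = 0" by simp
  thus False using two_nz ii_nz by simp
qed

lemma cj_add [simp]: "cnj q (x + y :: 'k) = cnj q x + cnj q y" by (simp add: cnj_def frob_add)
lemma cj_diff [simp]: "cnj q (x - y :: 'k) = cnj q x - cnj q y" by (simp add: cnj_def frob_diff)
lemma cj_minus [simp]: "cnj q (- x :: 'k) = - cnj q x" by (simp add: cnj_def frob_minus)
lemma cj_mult [simp]: "cnj q (x * y :: 'k) = cnj q x * cnj q y" by (simp add: cnj_def power_mult_distrib)
lemma cj_divide [simp]: "cnj q (x / y :: 'k) = cnj q x / cnj q y" by (simp add: cnj_def power_divide)
lemma cj_cnj [simp]: "cnj q (cnj q (x :: 'k)) = x" by (simp add: cnj_def frob_invol)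
lemma cnj_ii' [simp]: "cnj q ii = - ii" by (simp add: cnj_def cnj_ii)
lemma cj_2 [simp]: "cnj q (2::'k) = 2" using Fq_2 by (simp add: cnj_def Fq_def)
lemma cj_Fq: "x \<in> Fq q \<Longrightarrow> cnj q x = x" by (simp add: cnj_def Fq_def)
lemma cj_sum: "cnj q (sum f A :: 'k) = sum (\<lambda>i. cnj q (f i)) A" by (simp add: cnj_def frob_sum)

lemma Omega_add: "Omega ii (x + y) = Omega ii x + Omega ii y"
  by (simp add: Omega_def mat2_eq algebra_simps)

lemma Omega_scale: "Omega ii (a *s x) = smat a (Omega ii x)"
  by (simp add: Omega_def mat2_eq smat_def algebra_simps)

lemma ii_sq: "ii * ii = -1" using ii2 by (simp add: power2_eq_square)
lemma ii_sq2: "ii * (ii * x) = - x" by (simp add: mult.assoc[symmetric] ii_sq)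
lemma four_nz: "(4::'k) \<noteq> 0" using two_nz by (metis mult_2 numeral_Bit0 mult_eq_0_iff one_add_one)

lemma det_Omega: "det (Omega ii r) = mink r r"
  by (simp add: det_2 Omega_def mink_def algebra_simps ii_sq ii_sq2)

lemma Oinv_Omega [simp]: "Oinv ii (Omega ii r) = r"
  using two_nz ii_nz by (simp add: Oinv_def Omega_def vec4_eq field_simps)

lemma Omega_Oinv [simp]: "Omega ii (Oinv ii A) = A"
  using two_nz ii_nz four_nz by (simp add: Oinv_def Omega_def mat2_eq field_simps ii_sq)

lemma inj_Omega: "inj (Omega ii)"
  by (metis Oinv_Omega injI)

lemma H2_iff: "(A::'k^2^2) \<in> H2 q \<longleftrightarrow> cnj q (A$1$1) = A$1$1 \<and> cnj q (A$2$2) = A$2$2 \<and> cnj q (A$1$2) = A$2$1"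
proof -
  have "A \<in> H2 q \<longleftrightarrow> (\<forall>i j. cnj q (A$j$i) = A$i$j)" by (simp add: H2_def adjm_def vec_eq_iff)
  also have "\<dots> \<longleftrightarrow> cnj q (A$1$1) = A$1$1 \<and> cnj q (A$2$1) = A$1$2 \<and> cnj q (A$1$2) = A$2$1 \<and> cnj q (A$2$2) = A$2$2"
    by (simp only: forall_2 conj_assoc)
  also have "\<dots> \<longleftrightarrow> cnj q (A$1$1) = A$1$1 \<and> cnj q (A$2$2) = A$2$2 \<and> cnj q (A$1$2) = A$2$1"
  proof -
    have "cnj q (A$2$1) = A$1$2 \<longleftrightarrow> cnj q (A$1$2) = A$2$1" by (metis cj_cnj)
    thus ?thesis by blast
  qed
  finally show ?thesis .
qed

lemma Fq4_iff: "(r::'k^4) \<in> Fq4 q \<longleftrightarrow> r$1 \<in> Fq q \<and> r$2 \<in> Fq q \<and> r$3 \<in> Fq q \<and> r$4 \<in> Fq q"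
  by (simp add: Fq4_def forall_4)

lemma Fq_iff: "(x::'k) \<in> Fq q \<longleftrightarrow> cnj q x = x" by (simp add: Fq_def cnj_def)

lemma Omega_H2: "r \<in> Fq4 q \<Longrightarrow> Omega ii r \<in> H2 q"
  by (simp add: H2_iff Fq4_iff Omega_def cj_Fq)

lemma Oinv_H2: assumes "(A::'k^2^2) \<in> H2 q" shows "Oinv ii A \<in> Fq4 q"
proof -
  have h: "cnj q (A$1$1) = A$1$1" "cnj q (A$2$2) = A$2$2" "cnj q (A$1$2) = A$2$1" using assms H2_iff by auto
  have h2: "cnj q (A$2$1) = A$1$2" using h(3) by (metis cj_cnj)
  have e: "- ((A $ 2 $ 1 - A $ 1 $ 2) / (ii * 2)) = (A $ 1 $ 2 - A $ 2 $ 1) / (ii * (2::'k))"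
    by (simp only: minus_divide_left minus_diff_eq)
  show ?thesis using h h2 two_nz e by (simp add: Fq4_iff Oinv_def Fq_iff field_simps)
qed
  
lemma inv_Omega_eval: "A \<in> H2 q \<Longrightarrow> inv_into (Fq4 q) (Omega ii) A = Oinv ii A"
  by (rule inv_into_f_eq) (auto intro: Oinv_H2 inj_on_subset[OF inj_Omega])

lemma inv_Omega_f: "s \<in> S \<Longrightarrow> inv_into S (Omega ii) (Omega ii s) = s"
  by (rule inv_into_f_f) (auto intro: inj_on_subset[OF inj_Omega])


lemma H2_add: "(A::'k^2^2) \<in> H2 q \<Longrightarrow> B \<in> H2 q \<Longrightarrow> A + B \<in> H2 q"
  by (simp add: H2_iff)

lemma Oinv_add: "Oinv ii (A + B) = Oinv ii A + Oinv ii B"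
  by (simp add: Oinv_def vec4_eq add_divide_distrib[symmetric] diff_divide_distrib[symmetric] algebra_simps)

lemma part1:
  assumes "B \<in> H2 q" "\<forall>A \<in> H2 q. Psi A = A + B"
  shows "\<exists>r0 \<in> Fq4 q. \<forall>r \<in> Fq4 q. psi_of q ii Psi r = r + r0"
proof (intro bexI[of _ "Oinv ii B"] ballI)
  show "Oinv ii B \<in> Fq4 q" using assms(1) by (rule Oinv_H2)
  fix r :: "'k^4" assume r: "r \<in> Fq4 q"
  have h: "Omega ii r \<in> H2 q" using r by (rule Omega_H2)
  have "psi_of q ii Psi r = inv_into (Fq4 q) (Omega ii) (Omega ii r + B)"
    using assms(2) h by (simp add: psi_of_def)
  also have "\<dots> = Oinv ii (Omega ii r + B)"
    by (rule inv_Omega_eval) (use H2_add[OF h assms(1)] in simp)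
  also have "\<dots> = r + Oinv ii B" by (simp add: Oinv_add)
  finally show "psi_of q ii Psi r = r + Oinv ii B" .
qed

end

definition diag4 :: "('b \<Rightarrow> 'a::zero) \<Rightarrow> 'a^'b^'b" where
  "diag4 d = (\<chi> i j. if i = j then d i else 0)"

lemma diag4_mult: "diag4 d *v r = (\<chi> i. d i * r $ i)"
  by (simp add: diag4_def matrix_vector_mult_def vec_eq_iff if_distrib if_distribR cong: if_cong)

lemma mink_scale: "mink (a *s x) (b *s y) = a * b * mink x y"
  by (simp add: mink_def algebra_simps)

lemma mink_sym: "mink x y = mink y x"
  by (simp add: mink_def algebra_simps)

lemma mink_add_sq: "mink (x + y) (x + y) = mink x x + 2 * mink x y + mink y y"
  by (simp add: mink_def algebra_simps)

lemma matrix_inv_eqI: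
  fixes A :: "'a::field^'n^'n"
  assumes "invertible A" "A ** B = mat 1"
  shows "matrix_inv A = B"
proof -
  have "A ** matrix_inv A = mat 1 \<and> matrix_inv A ** A = mat 1"
    using assms(1) unfolding invertible_def matrix_inv_def by (rule someI_ex)
  hence "matrix_inv A ** A = mat 1" by blast
  have "matrix_inv A = matrix_inv A ** (A ** B)" using assms(2) by simp
  also have "\<dots> = (matrix_inv A ** A) ** B" by (rule matrix_mul_assoc)
  also have "\<dots> = B" using \<open>matrix_inv A ** A = mat 1\<close> by simp
  finally show ?thesis .
qed

lemma mat2_adj: "(mat2 a b c d :: 'a::comm_ring_1^2^2) ** mat2 d (-b) (-c) a = mat2 (a*d-b*c) 0 0 (a*d-b*c)"
  by (simp add: mult2_mat2 algebra_simps)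

lemma smat_right: "(A :: 'a::comm_semiring_1^'n^'m) ** smat k B = smat k (A ** B)"
  by (simp add: smat_def matrix_matrix_mult_def vec_eq_iff sum_distrib_left algebra_simps)

lemma smat_left: "smat k (A :: 'a::comm_semiring_1^'n^'m) ** B = smat k (A ** B)"
  by (simp add: smat_def matrix_matrix_mult_def vec_eq_iff sum_distrib_left algebra_simps)

lemma mat1_2: "(mat 1 :: 'a::{zero,one}^2^2) = mat2 1 0 0 1"
  by (simp add: mat2_eq mat_def)

context LS begin

lemma lorentz_diag:
  assumes "\<forall>i. d i \<in> Fq q" "\<forall>i. d i * d i = (1::'k)"
  shows "lorentz q (diag4 d)"
proof -
  have "mink (diag4 d *v r1) (diag4 d *v r2) = mink r1 r2" for r1 r2 :: "'k^4"
  proof -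
    have e: "d i * x * (d i * y) = x * y" for i and x y :: 'k
      using assms(2)[rule_format, of i] by (metis mult.assoc mult.commute mult_1)
    show ?thesis by (simp add: diag4_mult mink_def e)
  qed
  thus ?thesis using assms(1) by (simp add: lorentz_def diag4_def)
qed

lemma part2:
  assumes "\<forall>A \<in> HGL2 q. Phi A = matrix_inv A"
  shows "\<exists>L. lorentz q L \<and> (\<forall>r \<in> Fq4 q - C0 q. phi_of q ii Phi r = (1 / mink r r) *s (L *v r))"
proof (intro exI conjI ballI)
  define d :: "4 \<Rightarrow> 'k" where "d = (\<lambda>i. if i = 4 then 1 else -1)"
  show "lorentz q (diag4 d)" by (rule lorentz_diag) (auto simp: d_def)
  fix r :: "'k^4" assume r: "r \<in> Fq4 q - C0 q"
  define m where "m = mink r r"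
  have rF: "r \<in> Fq4 q" and m0: "m \<noteq> 0" using r by (auto simp: C0_def m_def)
  have mF: "m \<in> Fq q" using rF by (simp add: m_def mink_def Fq4_iff)
  define s where "s = (1 / m) *s (diag4 d *v r)"
  have s_c: "s = vec4 (- r$1 / m) (- r$2 / m) (- r$3 / m) (r$4 / m)"
    by (simp add: s_def diag4_mult d_def vec4_eq)
  have sF: "s \<in> Fq4 q" using rF mF by (simp add: s_c Fq4_iff)
  have "mink (diag4 d *v r) (diag4 d *v r) = m" by (simp add: diag4_mult d_def mink_def m_def)
  hence "mink s s = (1/m) * (1/m) * m"
    unfolding s_def mink_scale by simp
  hence "mink s s \<noteq> 0" using m0 by simp
  hence sC: "s \<in> Fq4 q - C0 q" using sF by (simp add: C0_def)
  have inv: "invertible (Omega ii r)" using m0 by (simp add: invertible_det_nz det_Omega m_def)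
  have HG: "Omega ii r \<in> HGL2 q" using inv Omega_H2[OF rF] by (simp add: HGL2_def)
  have os: "Omega ii s = smat (1/m) (mat2 (r$4 - r$1) (-(r$2 + ii*r$3)) (-(r$2 - ii*r$3)) (r$4 + r$1))"
    using m0 by (simp add: Omega_def s_c smat_def mat2_eq field_simps)
  have D: "(r$4 + r$1) * (r$4 - r$1) - (r$2 + ii*r$3) * (r$2 - ii*r$3) = m"
    by (simp add: m_def mink_def algebra_simps ii_sq ii_sq2)
  have prod: "Omega ii r ** Omega ii s = mat 1"
    unfolding os smat_right unfolding Omega_def mat2_adj D mat1_2
    using m0 by (simp add: smat_def mat2_eq)
  have "phi_of q ii Phi r = inv_into (Fq4 q - C0 q) (Omega ii) (Omega ii s)"
    using assms HG matrix_inv_eqI[OF inv prod] by (simp add: phi_of_def)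
  also have "\<dots> = s" using sC by (rule inv_Omega_f)
  finally show "phi_of q ii Phi r = (1 / mink r r) *s (diag4 d *v r)" by (simp add: s_def m_def)
qed


lemma part3:
  fixes \<sigma> :: "'k \<Rightarrow> 'k"
  assumes sa: "field_aut \<sigma>" and PsiA: "\<forall>A \<in> H2 q. Psi A = (\<chi> i j. \<sigma> (A $ i $ j))"
  shows "\<exists>L \<tau>. lorentz q L \<and> Fq_aut q \<tau> \<and> (\<forall>r \<in> Fq4 q. psi_of q ii Psi r = L *v (\<chi> i. \<tau> (r $ i)))"
proof -
  have add: "\<And>x y. \<sigma> (x + y) = \<sigma> x + \<sigma> y" and mul: "\<And>x y. \<sigma> (x * y) = \<sigma> x * \<sigma> y"
    and bj: "bij \<sigma>" using sa by (auto simp: field_aut_def)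
  have s0: "\<sigma> 0 = 0" using add[of 0 0] by (metis add.right_neutral add_left_cancel)
  have sminus: "\<sigma> (- x) = - \<sigma> x" for x using add[of x "-x"] s0 by (simp add: eq_neg_iff_add_eq_0 add.commute)
  have sdiff: "\<sigma> (x - y) = \<sigma> x - \<sigma> y" for x y using add[of x "-y"] sminus[of y] by simp
  have inj: "inj \<sigma>" using bj bij_def by blast
  have s1: "\<sigma> 1 = 1"
  proof -
    have "\<sigma> 1 \<noteq> 0" using inj s0 by (metis injD one_neq_zero)
    moreover have "\<sigma> 1 * \<sigma> 1 = \<sigma> 1 * 1" using mul[of 1 1] by simp
    ultimately show ?thesis by simp
  qed
  have spow: "\<sigma> (x ^ n) = \<sigma> x ^ n" for x n by (induction n) (simp_all add: s1 mul)
  have sFq: "x \<in> Fq q \<Longrightarrow> \<sigma> x \<in> Fq q" for x by (simp add: Fq_def spow[symmetric])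
  have "\<sigma> ii * \<sigma> ii = -1" using ii_sq mul[of ii ii] sminus[of 1] s1 by simp
  hence "(\<sigma> ii - ii) * (\<sigma> ii + ii) = 0" using ii_sq by (simp add: algebra_simps)
  hence sii: "\<sigma> ii = ii \<or> \<sigma> ii = - ii" by (simp add: eq_neg_iff_add_eq_0)
  define e :: 'k where "e = (if \<sigma> ii = ii then 1 else -1)"
  have e_ii: "\<sigma> ii = e * ii" using sii by (auto simp: e_def)
  have eF: "e \<in> Fq q" by (simp add: e_def)
  have ee: "e * e = 1" by (simp add: e_def)
  define d :: "4 \<Rightarrow> 'k" where "d = (\<lambda>i. if i = 3 then e else 1)"
  have lor: "lorentz q (diag4 d)" by (rule lorentz_diag) (auto simp: d_def eF ee)
  have aut: "Fq_aut q \<sigma>"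
  proof -
    have "\<sigma> ` Fq q = Fq q" by (rule endo_inj_surj) (auto simp: sFq intro: inj_on_subset[OF inj])
    hence "bij_betw \<sigma> (Fq q) (Fq q)" using inj_on_subset[OF inj] by (simp add: bij_betw_def)
    thus ?thesis by (simp add: Fq_aut_def add mul)
  qed
  have "\<forall>r \<in> Fq4 q. psi_of q ii Psi r = diag4 d *v (\<chi> i. \<sigma> (r $ i))"
  proof
    fix r :: "'k^4" assume rF: "r \<in> Fq4 q"
    define s where "s = diag4 d *v (\<chi> i. \<sigma> (r $ i))"
    have sF: "s \<in> Fq4 q" using rF by (simp add: s_def diag4_mult Fq4_iff d_def eF sFq)
    have "Psi (Omega ii r) = Omega ii s"
      using PsiA Omega_H2[OF rF]
      by (simp add: Omega_def s_def diag4_mult d_def mat2_eq add sdiff mul e_ii)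
    hence "psi_of q ii Psi r = inv_into (Fq4 q) (Omega ii) (Omega ii s)" by (simp add: psi_of_def)
    also have "\<dots> = s" using sF by (rule inv_Omega_f)
    finally show "psi_of q ii Psi r = diag4 d *v (\<chi> i. \<sigma> (r $ i))" by (simp add: s_def)
  qed
  thus ?thesis using lor aut by blast
qed



lemma adjm_mult: "adjm q ((A::'k^2^2) ** B) = adjm q B ** adjm q A"
  by (simp add: adjm_def matrix_matrix_mult_def vec_eq_iff cj_sum mult.commute)

lemma adjm_adjm [simp]: "adjm q (adjm q (A::'k^2^2)) = A"
  by (simp add: adjm_def vec_eq_iff)

lemma H2_conj: "(X::'k^2^2) \<in> H2 q \<Longrightarrow> P ** X ** adjm q P \<in> H2 q"
  unfolding H2_def by (simp add: adjm_mult matrix_mul_assoc)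

lemma det_adjm: "det (adjm q (P::'k^2^2)) = cnj q (det P)"
  by (simp add: det_2 adjm_def)

lemma Oinv_smat: "Oinv ii (smat a A) = a *s Oinv ii A"
  by (simp add: Oinv_def vec4_eq smat_def algebra_simps)

lemma matrix_add_rdistrib': "((A + B) ** C) = (A ** C) + (B ** (C::'a::semiring_1^_^_))"
  by (vector matrix_matrix_mult_def sum.distrib[symmetric] field_simps)

lemma part45_core:
  fixes P :: "'k^2^2"
  assumes "invertible P"
  and F_def: "F = (\<lambda>r. Oinv ii (P ** Omega ii r ** adjm q P))"
  and N_def: "N = det P * cnj q (det P)"
  and M_def: "M = (\<chi> i j. F (axis j 1) $ i)"
  shows "N \<in> Fq q" "N \<noteq> 0" "\<forall>i j. M $ i $ j \<in> Fq q"
    "\<And>r. F r = M *v r" "\<And>r1 r2. mink (F r1) (F r2) = N * mink r1 r2"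
    "\<And>r. r \<in> Fq4 q \<Longrightarrow> F r \<in> Fq4 q"
proof -
  have dP: "det P \<noteq> 0" using assms(1) by (simp add: invertible_det_nz)
  show "N \<in> Fq q" unfolding N_def Fq_iff by (simp add: mult.commute)
  show "N \<noteq> 0" unfolding N_def using dP by (simp add: cnj_def)
  have Fadd: "F (x + y) = F x + F y" for x y
    by (simp add: F_def Omega_add matrix_add_ldistrib matrix_add_rdistrib' Oinv_add)
  have Fscale: "F (a *s x) = a *s F x" for a x
    by (simp add: F_def Omega_scale smat_right smat_left Oinv_smat)
  have F0: "F 0 = 0" using Fadd[of 0 0] by simp
  have Fsum: "F (sum g S) = sum (\<lambda>j. F (g j)) S" if "finite S" for g :: "4 \<Rightarrow> 'k^4" and S
    using that by (induction S rule: finite_induct) (simp_all add: F0 Fadd)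
  show Flin: "F r = M *v r" for r
  proof -
    have "F r = F (sum (\<lambda>j. r$j *s axis j 1) UNIV)" by (simp add: basis_expansion)
    also have "\<dots> = sum (\<lambda>j. r$j *s F (axis j 1)) UNIV" by (simp add: Fsum Fscale)
    also have "\<dots> = M *v r" by (simp add: matrix_mult_sum M_def column_def)
    finally show ?thesis .
  qed
  show FF: "F r \<in> Fq4 q" if "r \<in> Fq4 q" for r
    unfolding F_def by (intro Oinv_H2 H2_conj Omega_H2 that)
  show "\<forall>i j. M $ i $ j \<in> Fq q"
  proof (intro allI)
    fix i j
    have "axis j (1::'k) \<in> Fq4 q" by (simp add: Fq4_def axis_def)
    hence "F (axis j 1) \<in> Fq4 q" by (rule FF)
    thus "M $ i $ j \<in> Fq q" by (simp add: M_def Fq4_def)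
  qed
  have quad: "mink (F r) (F r) = N * mink r r" for r
  proof -
    have "mink (F r) (F r) = det (Omega ii (F r))" by (simp add: det_Omega)
    also have "\<dots> = det (P ** Omega ii r ** adjm q P)" by (simp add: F_def)
    also have "\<dots> = N * mink r r" by (simp add: det_mul det_adjm det_Omega N_def)
    finally show ?thesis .
  qed
  show "mink (F r1) (F r2) = N * mink r1 r2" for r1 r2
  proof -
    have "2 * mink (F r1) (F r2) = mink (F (r1 + r2)) (F (r1 + r2)) - mink (F r1) (F r1) - mink (F r2) (F r2)"
      by (simp add: Fadd mink_add_sq)
    also have "\<dots> = N * (2 * mink r1 r2)"
      by (simp add: quad mink_add_sq algebra_simps)
    finally show ?thesis using two_nz by simp
  qed
qed


lemma part45_final:
  fixes P :: "'k^2^2"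
  assumes inv: "invertible P" and PsiA: "\<forall>A \<in> H2 q. Psi A = P ** A ** adjm q P"
    and aF: "\<alpha> \<in> Fq q" and a0: "\<alpha> \<noteq> 0" and aN: "\<alpha>^2 * \<kappa> = det P * cnj q (det P)"
  shows "\<exists>K. (\<forall>i j. K $ i $ j \<in> Fq q) \<and> (\<forall>r1 r2. mink (K *v r1) (K *v r2) = \<kappa> * mink r1 r2)
     \<and> (\<forall>r \<in> Fq4 q. psi_of q ii Psi r = \<alpha> *s (K *v r))"
proof -
  define F where "F = (\<lambda>r. Oinv ii (P ** Omega ii r ** adjm q P))"
  define N where "N = det P * cnj q (det P)"
  define M where "M = (\<chi> i j. F (axis j 1) $ i)"
  note core = part45_core[OF inv F_def N_def M_def]
  define K where "K = (\<chi> i j. M $ i $ j / \<alpha>)"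
  have KM: "K *v r = (1/\<alpha>) *s (M *v r)" for r
    by (simp add: K_def matrix_vector_mult_def vec_eq_iff sum_distrib_left algebra_simps)
  have MF: "M $ i $ j \<in> Fq q" for i j using core(3) by blast
  have "\<forall>i j. K $ i $ j \<in> Fq q" using MF aF by (simp add: K_def)
  moreover have "mink (K *v r1) (K *v r2) = \<kappa> * mink r1 r2" for r1 r2
  proof -
    have "mink (K *v r1) (K *v r2) = (1/\<alpha>) * (1/\<alpha>) * (N * mink r1 r2)"
      by (simp add: KM mink_scale core(5)[symmetric] core(4)[symmetric])
    also have "\<dots> = \<kappa> * mink r1 r2" using a0 aN by (simp add: N_def[symmetric] field_simps power2_eq_square)
    finally show ?thesis .
  qed
  moreover have "\<forall>r \<in> Fq4 q. psi_of q ii Psi r = \<alpha> *s (K *v r)"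
  proof
    fix r :: "'k^4" assume rF: "r \<in> Fq4 q"
    have h: "Omega ii r \<in> H2 q" using rF by (rule Omega_H2)
    have "psi_of q ii Psi r = inv_into (Fq4 q) (Omega ii) (P ** Omega ii r ** adjm q P)"
      using PsiA h by (simp add: psi_of_def)
    also have "\<dots> = F r" unfolding F_def by (rule inv_Omega_eval) (rule H2_conj[OF h])
    also have "\<dots> = \<alpha> *s (K *v r)" using a0 by (simp add: KM core(4))
    finally show "psi_of q ii Psi r = \<alpha> *s (K *v r)" .
  qed
  ultimately show ?thesis by blast
qed

lemma nonsquare:
  assumes NF: "N \<in> Fq q" and N0: "(N::'k) \<noteq> 0" and ns: "\<not> (\<exists>s \<in> Fq q. N = s ^ 2)"
  shows "\<exists>a \<in> Fq q. a \<noteq> 0 \<and> a^2 * (-1) = N"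
proof -
  define G where "G = Fq q - {0::'k}"
  define S where "S = (\<lambda>x. x^2) ` G"
  have fG: "finite G" by (simp add: G_def)
  have SG: "S \<subseteq> G" by (auto simp: S_def G_def)
  have fS: "finite S" using fG by (simp add: S_def)
  have GU: "G = (\<Union>y\<in>S. {x\<in>G. x^2 = y})" by (auto simp: S_def)
  have fib: "card {x\<in>G. x^2 = y} = 2" if yS: "y \<in> S" for y
  proof -
    obtain z where z: "z \<in> G" "y = z^2" using yS unfolding S_def by blast
    have "{x\<in>G. x^2 = y} = {z, -z}" using z by (auto simp: G_def power2_eq_iff)
    moreover have "z \<noteq> -z"
    proof
      assume "z = -z" hence "2 * z = 0" by simp
      thus False using z two_nz by (simp add: G_def)
    qed
    ultimately show ?thesis by simp
  qed
  have "card G = (\<Sum>y\<in>S. card {x\<in>G. x^2 = y})"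
    by (subst GU, rule card_UN_disjoint) (use fS fG in auto)
  also have "\<dots> = 2 * card S" using fib by simp
  finally have cG: "card G = 2 * card S" .
  define T where "T = (\<lambda>x. N * x) ` S"
  have TS: "T \<subseteq> G - S"
  proof
    fix t assume "t \<in> T"
    then obtain z where z: "z \<in> G" "t = N * z^2" by (auto simp: T_def S_def)
    have tG: "t \<in> G" using z NF N0 by (auto simp: G_def)
    have "t \<notin> S"
    proof
      assume "t \<in> S"
      then obtain w where w: "w \<in> G" "t = w^2" by (auto simp: S_def)
      have "N = (w / z)^2" using z w by (auto simp: G_def power_divide)
      moreover have "w / z \<in> Fq q" using z w by (simp add: G_def)
      ultimately show False using ns by blast
    qed
    thus "t \<in> G - S" using tG by simp
  qed
  have "card T = card S" unfolding T_def using N0 by (intro card_image inj_onI) simp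
  also have "\<dots> = card (G - S)" using cG SG fS by (simp add: card_Diff_subset)
  finally have "T = G - S" using TS fG by (intro card_subset_eq) auto
  moreover have "-1 \<in> G - S"
  proof -
    have "-1 \<notin> S"
    proof
      assume "-1 \<in> S"
      then obtain z where zG: "z \<in> G" "-1 = z^2" unfolding S_def by blast
      hence z: "z \<in> Fq q" "-1 = z^2" by (auto simp: G_def)
      hence "z^2 = ii^2" using ii2 by simp
      hence "z = ii \<or> z = -ii" by (simp add: power2_eq_iff)
      hence "ii \<in> Fq q" using z(1) by (metis Fq_minus minus_minus)
      thus False using ii_notin by simp
    qed
    thus ?thesis by (simp add: G_def)
  qed
  ultimately have "-1 \<in> T" by simp
  then obtain z where z: "z \<in> G" "-1 = N * z^2" unfolding T_def S_def by blast
  have z0: "z \<noteq> 0" and zF: "z \<in> Fq q" using z by (auto simp: G_def)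
  show ?thesis
  proof (intro bexI[of _ "1/z"] conjI)
    show "1/z \<in> Fq q" using zF by simp
    show "1/z \<noteq> 0" using z0 by simp
    show "(1/z)^2 * (-1) = N" using z(2) z0 by (simp add: field_simps power2_eq_square)
  qed
qed


lemma N_facts:
  fixes P :: "'k^2^2" assumes "invertible P"
  shows "det P * cnj q (det P) \<in> Fq q" "det P * cnj q (det P) \<noteq> 0"
  using part45_core[OF assms refl refl refl] by blast+

lemma part4:
  fixes P :: "'k^2^2"
  assumes inv: "invertible P" and sq: "\<exists>s \<in> Fq q. det P * cnj q (det P) = s ^ 2"
    and PsiA: "\<forall>A \<in> H2 q. Psi A = P ** A ** adjm q P"
  shows "\<exists>L \<alpha>. lorentz q L \<and> \<alpha> \<in> Fq q \<and> \<alpha> \<noteq> 0 \<and> (\<forall>r \<in> Fq4 q. psi_of q ii Psi r = \<alpha> *s (L *v r))"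
proof -
  obtain s where s: "s \<in> Fq q" "det P * cnj q (det P) = s ^ 2" using sq by blast
  have s0: "s \<noteq> 0" using N_facts(2)[OF inv] s(2) by auto
  obtain K where K: "\<forall>i j. K $ i $ j \<in> Fq q" "\<forall>r1 r2. mink (K *v r1) (K *v r2) = 1 * mink r1 r2"
    "\<forall>r \<in> Fq4 q. psi_of q ii Psi r = s *s (K *v r)"
    using part45_final[OF inv PsiA s(1) s0, of 1] s(2) by auto
  have "lorentz q K" using K(1,2) by (simp add: lorentz_def)
  thus ?thesis using K(3) s s0 by blast
qed

lemma part5:
  fixes P :: "'k^2^2"
  assumes inv: "invertible P" and nsq: "\<not> (\<exists>s \<in> Fq q. det P * cnj q (det P) = s ^ 2)"
    and PsiA: "\<forall>A \<in> H2 q. Psi A = P ** A ** adjm q P"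
  shows "\<exists>K \<alpha>. anti_lorentz q K \<and> \<alpha> \<in> Fq q \<and> \<alpha> \<noteq> 0 \<and> (\<forall>r \<in> Fq4 q. psi_of q ii Psi r = \<alpha> *s (K *v r))"
proof -
  obtain a where a: "a \<in> Fq q" "a \<noteq> 0" "a^2 * (-1) = det P * cnj q (det P)"
    using nonsquare[OF N_facts[OF inv] nsq] by blast
  obtain K where K: "\<forall>i j. K $ i $ j \<in> Fq q" "\<forall>r1 r2. mink (K *v r1) (K *v r2) = (-1) * mink r1 r2"
    "\<forall>r \<in> Fq4 q. psi_of q ii Psi r = a *s (K *v r)"
    using part45_final[OF inv PsiA a(1) a(2) a(3)] by auto
  have "anti_lorentz q K" using K(1,2) by (simp add: anti_lorentz_def)
  thus ?thesis using K(3) a by blast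
qed

end

theorem lemma4p8:
  fixes q :: nat and ii :: "'k::{field,finite}"
  assumes "prime_power q" and "q mod 4 = 3" and "CARD('k) = q ^ 2"
    and "ii ^ 2 = -1"
  shows
    "(\<forall>(Psi :: 'k^2^2 \<Rightarrow> 'k^2^2) B. B \<in> H2 q \<and> (\<forall>A \<in> H2 q. Psi A = A + B) \<longrightarrow>
        (\<exists>r0 \<in> Fq4 q. \<forall>r \<in> Fq4 q. psi_of q ii Psi r = r + r0))
   \<and> (\<forall>Phi :: 'k^2^2 \<Rightarrow> 'k^2^2. (\<forall>A \<in> HGL2 q. Phi A = matrix_inv A) \<longrightarrow>
        (\<exists>L. lorentz q L \<and> (\<forall>r \<in> Fq4 q - C0 q. phi_of q ii Phi r = (1 / mink r r) *s (L *v r))))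
   \<and> (\<forall>(Psi :: 'k^2^2 \<Rightarrow> 'k^2^2) \<sigma>. field_aut \<sigma> \<and> (\<forall>A \<in> H2 q. Psi A = (\<chi> i j. \<sigma> (A $ i $ j))) \<longrightarrow>
        (\<exists>L \<tau>. lorentz q L \<and> Fq_aut q \<tau> \<and>
           (\<forall>r \<in> Fq4 q. psi_of q ii Psi r = L *v (\<chi> i. \<tau> (r $ i)))))
   \<and> (\<forall>(Psi :: 'k^2^2 \<Rightarrow> 'k^2^2) P. invertible P \<and> (\<exists>s \<in> Fq q. det P * cnj q (det P) = s ^ 2)
          \<and> (\<forall>A \<in> H2 q. Psi A = P ** A ** adjm q P) \<longrightarrow>
        (\<exists>L \<alpha>. lorentz q L \<and> \<alpha> \<in> Fq q \<and> \<alpha> \<noteq> 0 \<and> (\<forall>r \<in> Fq4 q. psi_of q ii Psi r = \<alpha> *s (L *v r))))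
   \<and> (\<forall>(Psi :: 'k^2^2 \<Rightarrow> 'k^2^2) P. invertible P \<and> \<not> (\<exists>s \<in> Fq q. det P * cnj q (det P) = s ^ 2)
          \<and> (\<forall>A \<in> H2 q. Psi A = P ** A ** adjm q P) \<longrightarrow>
        (\<exists>K \<alpha>. anti_lorentz q K \<and> \<alpha> \<in> Fq q \<and> \<alpha> \<noteq> 0 \<and> (\<forall>r \<in> Fq4 q. psi_of q ii Psi r = \<alpha> *s (K *v r))))"
proof -
  interpret LS q ii using assms by unfold_locales
  show ?thesis
    apply (intro conjI allI impI)
        apply (elim conjE, erule (1) part1)
       apply (erule part2)
      apply (elim conjE, erule (1) part3)
     apply (elim conjE, erule (2) part4)
    apply (elim conjE, erule (2) part5)
    done
qed

end
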